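(* Let $1,2,3,4$ be four distinct vertices of $G$ such that $G[\{1,2,3,4\}]$ has edge set exactly $\{12,13,23,24,34\}$. If $\Gamma_G$ is population monotonic, then $w_{23}\ge w_{12}+w_{13}$ and $w_{23}\ge w_{24}+w_{34}$.
   Context: $G=(V,E;w)$ is a finite simple graph with edge weights $w:E\to\mathbb{R}$, $w_e>0$ for all $e\in E$; $w_{ij}$ denotes the weight of edge $ij$. The matching game on $G$ is the cooperative game $\Gamma_G=(N,\gamma)$ with player set $N=V$ and, for $S\subseteq N$, $\gamma(S)$ equal to the maximum weight of a matching in the induced subgraph $G[S]$ (so $\gamma(\emptyset)=0$). A population monotonic allocation scheme (PMAS) is a family $(\boldsymbol{x}_S)_{\emptyset\neq S\subseteq N}$ with $\boldsymbol{x}_S=(x_{S,i})_{i\in S}\in\mathbb{R}^S$ such that (efficiency) $\sum_{i\in S}x_{S,i}=\gamma(S)$ for every nonempty $S\subseteq N$, and (monotonicity) $x_{S,i}\le x_{T,i}$ whenever $\emptyset\ne S\subseteq T\subseteq N$ and $i\in S$. $\Gamma_G$ is called population monotonic if it admits a PMAS. *)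

theory Defs
  imports Complex_Main
begin

definition simple_graph :: "'a set \<Rightarrow> 'a set set \<Rightarrow> bool" where
  "simple_graph V E \<longleftrightarrow> finite V \<and> (\<forall>e\<in>E. \<exists>u v. u \<noteq> v \<and> u \<in> V \<and> v \<in> V \<and> e = {u, v})"

definition pos_weighted :: "'a set set \<Rightarrow> ('a set \<Rightarrow> real) \<Rightarrow> bool" where
  "pos_weighted E w \<longleftrightarrow> (\<forall>e\<in>E. w e > 0)"

definition matching_in :: "'a set set \<Rightarrow> 'a set \<Rightarrow> 'a set set \<Rightarrow> bool" where
  "matching_in E S M \<longleftrightarrow> M \<subseteq> E \<and> (\<forall>e\<in>M. e \<subseteq> S) \<and>
     (\<forall>e\<in>M. \<forall>f\<in>M. e \<noteq> f \<longrightarrow> e \<inter> f = {})"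

definition gamma :: "'a set set \<Rightarrow> ('a set \<Rightarrow> real) \<Rightarrow> 'a set \<Rightarrow> real" where
  "gamma E w S = Max {sum w M | M. matching_in E S M}"

text \<open>Population monotonic allocation scheme: x S i is the payoff of i in
  coalition S (only meaningful for nonempty S \<subseteq> N and i \<in> S).\<close>

definition is_PMAS :: "'a set \<Rightarrow> ('a set \<Rightarrow> real) \<Rightarrow> ('a set \<Rightarrow> 'a \<Rightarrow> real) \<Rightarrow> bool" where
  "is_PMAS N v x \<longleftrightarrow>
     (\<forall>S. S \<subseteq> N \<and> S \<noteq> {} \<longrightarrow> (\<Sum>i\<in>S. x S i) = v S) \<and>
     (\<forall>S T i. S \<noteq> {} \<and> S \<subseteq> T \<and> T \<subseteq> N \<and> i \<in> S \<longrightarrow> x S i \<le> x T i)"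

definition population_monotonic :: "'a set \<Rightarrow> ('a set \<Rightarrow> real) \<Rightarrow> bool" where
  "population_monotonic N v \<longleftrightarrow> (\<exists>x. is_PMAS N v x)"

end

theory Submission
  imports Defs
begin

lemma tri_sub:
  assumes "M \<subseteq> {A,B,C}" "\<forall>e\<in>M. \<forall>f\<in>M. e\<noteq>f \<longrightarrow> e\<inter>f={}"
    "A\<inter>B\<noteq>{}" "A\<inter>C\<noteq>{}" "B\<inter>C\<noteq>{}" "0\<le>w A" "0\<le>w B" "0\<le>(w C::real)"
  shows "sum w M \<le> max (w A) (max (w B) (w C))"
proof -
  have "M={} \<or> M={A} \<or> M={B} \<or> M={C}"
  proof (rule ccontr)
    assume "\<not> ?thesis"
    then obtain e f where "e\<in>M" "f\<in>M" "e\<noteq>f" using assms(1) by blast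
    then show False using assms by blast
  qed
  then show ?thesis using assms(6-8) by auto
qed

lemma match_set_finite:
  assumes "finite S"
  shows "finite {sum w M | M. matching_in E S M}"
proof -
  have eq: "{sum w M | M. matching_in E S M} = sum w ` {M. matching_in E S M}" by blast
  have "{M. matching_in E S M} \<subseteq> Pow (Pow S)"
    unfolding matching_in_def by auto
  moreover have "finite (Pow (Pow S))" using assms by simp
  ultimately have "finite {M. matching_in E S M}" by (rule finite_subset)
  then show ?thesis unfolding eq by (rule finite_imageI)
qed

lemma gamma_ge:
  assumes "finite S" "matching_in E S M"
  shows "sum w M \<le> gamma E w S"
  unfolding gamma_def using match_set_finite[OF assms(1)] assms(2)
  by (intro Max_ge) auto

lemma gamma_obtain:
  assumes "finite S"
  shows "\<exists>M. matching_in E S M \<and> gamma E w S = sum w M"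
proof -
  have "matching_in E S {}" by (simp add: matching_in_def)
  then have "{sum w M | M. matching_in E S M} \<noteq> {}" by blast
  from Max_in[OF match_set_finite[OF assms] this] show ?thesis
    unfolding gamma_def by blast
qed

lemma arith_core:
  fixes a b c d e y12_1 y12_2 y13_1 y13_3 y23_2 y23_3 y24_2 y24_4 y34_3 y34_4
    t1 t2 t3 u2 u3 u4 r1 r3 r4 s1 s2 s4 :: real
  assumes "a > 0" "b > 0" "c > 0" "d > 0" "e > 0"
    "a \<le> y12_1 + y12_2" "b \<le> y13_1 + y13_3" "c \<le> y23_2 + y23_3" "d \<le> y24_2 + y24_4" "e \<le> y34_3 + y34_4"
    "t1 + t2 + t3 \<le> a \<or> t1 + t2 + t3 \<le> b \<or> t1 + t2 + t3 \<le> c"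
    "u2 + u3 + u4 \<le> c \<or> u2 + u3 + u4 \<le> d \<or> u2 + u3 + u4 \<le> e"
    "r1 + r3 + r4 \<le> b \<or> r1 + r3 + r4 \<le> e"
    "s1 + s2 + s4 \<le> a \<or> s1 + s2 + s4 \<le> d"
    "y12_1 \<le> t1" "y12_2 \<le> t2" "y13_1 \<le> t1" "y13_3 \<le> t3" "y23_2 \<le> t2" "y23_3 \<le> t3"
    "y23_2 \<le> u2" "y23_3 \<le> u3" "y24_2 \<le> u2" "y24_4 \<le> u4" "y34_3 \<le> u3" "y34_4 \<le> u4"
    "y13_1 \<le> r1" "y13_3 \<le> r3" "y34_3 \<le> r3" "y34_4 \<le> r4"
    "y12_1 \<le> s1" "y12_2 \<le> s2" "y24_2 \<le> s2" "y24_4 \<le> s4"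
    "0 \<le> y12_1" "0 \<le> y12_2" "0 \<le> y13_1" "0 \<le> y13_3" "0 \<le> y23_2" "0 \<le> y23_3"
    "0 \<le> y24_2" "0 \<le> y24_4" "0 \<le> y34_3" "0 \<le> y34_4"
    "0 \<le> t1" "0 \<le> t2" "0 \<le> t3" "0 \<le> u2" "0 \<le> u3" "0 \<le> u4"
    "0 \<le> r1" "0 \<le> r3" "0 \<le> r4" "0 \<le> s1" "0 \<le> s2" "0 \<le> s4"
  shows "c \<ge> a + b \<and> c \<ge> d + e"
  using assms by smt

theorem mainTheorem7:
  fixes V :: "'a set" and E :: "'a set set" and w :: "'a set \<Rightarrow> real"
    and v1 v2 v3 v4 :: 'a
  assumes "simple_graph V E" and "pos_weighted E w"
    and "v1 \<in> V" "v2 \<in> V" "v3 \<in> V" "v4 \<in> V"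
    and "distinct [v1, v2, v3, v4]"
    and "{e \<in> E. e \<subseteq> {v1, v2, v3, v4}} = {{v1,v2}, {v1,v3}, {v2,v3}, {v2,v4}, {v3,v4}}"
    and "population_monotonic V (gamma E w)"
  shows "w {v2,v3} \<ge> w {v1,v2} + w {v1,v3} \<and> w {v2,v3} \<ge> w {v2,v4} + w {v3,v4}"
proof -
  note d = assms(7)
  obtain x where x: "is_PMAS V (gamma E w) x"
    using assms(9) unfolding population_monotonic_def by (elim exE)
  have effA: "\<forall>S. S \<subseteq> V \<and> S \<noteq> {} \<longrightarrow> (\<Sum>i\<in>S. x S i) = gamma E w S"
    using x unfolding is_PMAS_def by (rule conjunct1)
  have monoA: "\<forall>S T i. S \<noteq> {} \<and> S \<subseteq> T \<and> T \<subseteq> V \<and> i \<in> S \<longrightarrow> x S i \<le> x T i"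
    using x unfolding is_PMAS_def by (rule conjunct2)
  have eff: "\<And>S. S \<subseteq> V \<Longrightarrow> S \<noteq> {} \<Longrightarrow> (\<Sum>i\<in>S. x S i) = gamma E w S"
    using effA by simp
  have mono: "\<And>S T i. S \<noteq> {} \<Longrightarrow> S \<subseteq> T \<Longrightarrow> T \<subseteq> V \<Longrightarrow> i \<in> S \<Longrightarrow> x S i \<le> x T i"
    using monoA by simp
  have inE5: "\<And>X. X \<in> {{v1,v2}, {v1,v3}, {v2,v3}, {v2,v4}, {v3,v4}} \<Longrightarrow> X \<in> E"
  proof -
    fix X assume "X \<in> {{v1,v2}, {v1,v3}, {v2,v3}, {v2,v4}, {v3,v4}}"
    then have "X \<in> {e \<in> E. e \<subseteq> {v1, v2, v3, v4}}" unfolding assms(8) .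
    then show "X \<in> E" by simp
  qed
  have inE: "{v1,v2} \<in> E" "{v1,v3} \<in> E" "{v2,v3} \<in> E" "{v2,v4} \<in> E" "{v3,v4} \<in> E"
    by (rule inE5; simp)+
  have wposA: "\<And>e. e \<in> E \<Longrightarrow> w e > 0" using assms(2) unfolding pos_weighted_def by (rule bspec)
  have wpos: "w {v1,v2} > 0" "w {v1,v3} > 0" "w {v2,v3} > 0" "w {v2,v4} > 0" "w {v3,v4} > 0"
    by (rule wposA, rule inE)+
  have nn: "\<And>S i. S \<subseteq> V \<Longrightarrow> i \<in> S \<Longrightarrow> 0 \<le> x S i"
  proof -
    fix S i assume "S \<subseteq> V" "i \<in> S"
    have "{i} \<subseteq> V" using \<open>S \<subseteq> V\<close> \<open>i \<in> S\<close> by blast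
    have "matching_in E {i} {}" by (simp add: matching_in_def)
    then have "0 \<le> gamma E w {i}" using gamma_ge[of "{i}" E "{}" w] by simp
    also have "gamma E w {i} = x {i} i" using eff[OF \<open>{i} \<subseteq> V\<close>] by simp
    also have "\<dots> \<le> x S i" using mono[of "{i}" S i] \<open>S \<subseteq> V\<close> \<open>i \<in> S\<close> by blast
    finally show "0 \<le> x S i" .
  qed
  have pair: "\<And>a b. {a,b} \<in> E \<Longrightarrow> a \<in> V \<Longrightarrow> b \<in> V \<Longrightarrow> a \<noteq> b \<Longrightarrow> w {a,b} \<le> x {a,b} a + x {a,b} b"
  proof -
    fix a b assume h: "{a,b} \<in> E" "a \<in> V" "b \<in> V" "a \<noteq> b"
    have "matching_in E {a,b} {{a,b}}" using h by (simp add: matching_in_def)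
    then have "w {a,b} \<le> gamma E w {a,b}" using gamma_ge[of "{a,b}" E "{{a,b}}" w] by simp
    also have "gamma E w {a,b} = x {a,b} a + x {a,b} b" using eff[of "{a,b}"] h by simp
    finally show "w {a,b} \<le> x {a,b} a + x {a,b} b" .
  qed
  have sub4: "\<And>e S. e \<in> E \<Longrightarrow> e \<subseteq> S \<Longrightarrow> S \<subseteq> {v1,v2,v3,v4} \<Longrightarrow> e \<in> {{v1,v2}, {v1,v3}, {v2,v3}, {v2,v4}, {v3,v4}}"
  proof -
    fix e S assume "e \<in> E" "e \<subseteq> S" "S \<subseteq> {v1,v2,v3,v4}"
    then have "e \<in> {e \<in> E. e \<subseteq> {v1, v2, v3, v4}}" by blast
    from this[unfolded assms(8)] show "e \<in> {{v1,v2}, {v1,v3}, {v2,v3}, {v2,v4}, {v3,v4}}" .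
  qed
  have trip: "\<And>a b c A B C. {a,b,c} \<subseteq> {v1,v2,v3,v4} \<Longrightarrow> {a,b,c} \<subseteq> V \<Longrightarrow> distinct [a,b,c] \<Longrightarrow>
     {e \<in> E. e \<subseteq> {a,b,c}} \<subseteq> {A,B,C} \<Longrightarrow> A\<inter>B\<noteq>{} \<Longrightarrow> A\<inter>C\<noteq>{} \<Longrightarrow> B\<inter>C\<noteq>{} \<Longrightarrow>
     0\<le>w A \<Longrightarrow> 0\<le>w B \<Longrightarrow> 0\<le>w C \<Longrightarrow>
     x {a,b,c} a + x {a,b,c} b + x {a,b,c} c \<le> max (w A) (max (w B) (w C))"
  proof -
    fix a b c A B C
    assume h: "{a,b,c} \<subseteq> {v1,v2,v3,v4}" "{a,b,c} \<subseteq> V" "distinct [a,b,c]"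
      "{e \<in> E. e \<subseteq> {a,b,c}} \<subseteq> {A,B,C}" "A\<inter>B\<noteq>{}" "A\<inter>C\<noteq>{}" "B\<inter>C\<noteq>{}"
      "0\<le>w A" "0\<le>w B" "0\<le>w C"
    obtain M where M: "matching_in E {a,b,c} M" "gamma E w {a,b,c} = sum w M"
      using gamma_obtain[of "{a,b,c}" E w] by auto
    from M(1) have Mp: "M \<subseteq> E" "\<forall>e\<in>M. e \<subseteq> {a,b,c}" "\<forall>e\<in>M. \<forall>f\<in>M. e\<noteq>f \<longrightarrow> e\<inter>f={}"
      by (simp_all add: matching_in_def)
    have "M \<subseteq> {A,B,C}"
    proof
      fix e assume "e \<in> M"
      then have "e \<in> {e \<in> E. e \<subseteq> {a,b,c}}" using Mp by blast
      then show "e \<in> {A,B,C}" using h(4) by (rule subsetD[rotated])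
    qed
    then have "sum w M \<le> max (w A) (max (w B) (w C))"
      by (rule tri_sub[OF _ Mp(3) h(5-10)])
    moreover have "gamma E w {a,b,c} = x {a,b,c} a + x {a,b,c} b + x {a,b,c} c"
      using eff[of "{a,b,c}"] h by simp
    ultimately show "x {a,b,c} a + x {a,b,c} b + x {a,b,c} c \<le> max (w A) (max (w B) (w C))"
      using M(2) by simp
  qed
  have 14: "{v1,v4} \<notin> E"
  proof
    assume "{v1,v4} \<in> E"
    then have "{v1,v4} \<in> {{v1,v2}, {v1,v3}, {v2,v3}, {v2,v4}, {v3,v4}}" using sub4 by blast
    then show False using d by (auto simp: doubleton_eq_iff)
  qed
  have t123: "x {v1,v2,v3} v1 + x {v1,v2,v3} v2 + x {v1,v2,v3} v3 \<le> max (w {v1,v2}) (max (w {v1,v3}) (w {v2,v3}))"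
  proof -
    have s123: "{e \<in> E. e \<subseteq> {v1,v2,v3}} \<subseteq> {{v1,v2},{v1,v3},{v2,v3}}"
    proof
      fix e assume "e \<in> {e \<in> E. e \<subseteq> {v1,v2,v3}}"
      then have "e \<in> E" "e \<subseteq> {v1,v2,v3}" by auto
      moreover have "e \<in> {{v1,v2}, {v1,v3}, {v2,v3}, {v2,v4}, {v3,v4}}" using sub4 calculation by blast
      ultimately show "e \<in> {{v1,v2},{v1,v3},{v2,v3}}" using d by auto
    qed
    show ?thesis apply (rule trip) using assms(3-6) d wpos s123 by auto
  qed
  have t234: "x {v2,v3,v4} v2 + x {v2,v3,v4} v3 + x {v2,v3,v4} v4 \<le> max (w {v2,v3}) (max (w {v2,v4}) (w {v3,v4}))"
  proof -
    have s234: "{e \<in> E. e \<subseteq> {v2,v3,v4}} \<subseteq> {{v2,v3},{v2,v4},{v3,v4}}"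
    proof
      fix e assume "e \<in> {e \<in> E. e \<subseteq> {v2,v3,v4}}"
      then have "e \<in> E" "e \<subseteq> {v2,v3,v4}" by auto
      moreover have "e \<in> {{v1,v2}, {v1,v3}, {v2,v3}, {v2,v4}, {v3,v4}}" using sub4 calculation by blast
      ultimately show "e \<in> {{v2,v3},{v2,v4},{v3,v4}}" using d by auto
    qed
    show ?thesis apply (rule trip) using assms(3-6) d wpos s234 by auto
  qed
  have t134: "x {v1,v3,v4} v1 + x {v1,v3,v4} v3 + x {v1,v3,v4} v4 \<le> max (w {v1,v3}) (max (w {v3,v4}) (w {v3,v4}))"
  proof -
    have s134: "{e \<in> E. e \<subseteq> {v1,v3,v4}} \<subseteq> {{v1,v3},{v3,v4},{v3,v4}}"
    proof
      fix e assume "e \<in> {e \<in> E. e \<subseteq> {v1,v3,v4}}"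
      then have "e \<in> E" "e \<subseteq> {v1,v3,v4}" by auto
      moreover have "e \<in> {{v1,v2}, {v1,v3}, {v2,v3}, {v2,v4}, {v3,v4}}" using sub4 calculation by blast
      ultimately show "e \<in> {{v1,v3},{v3,v4},{v3,v4}}" using d 14 by auto
    qed
    show ?thesis apply (rule trip) using assms(3-6) d wpos s134 by auto
  qed
  have t124: "x {v1,v2,v4} v1 + x {v1,v2,v4} v2 + x {v1,v2,v4} v4 \<le> max (w {v1,v2}) (max (w {v2,v4}) (w {v2,v4}))"
  proof -
    have s124: "{e \<in> E. e \<subseteq> {v1,v2,v4}} \<subseteq> {{v1,v2},{v2,v4},{v2,v4}}"
    proof
      fix e assume "e \<in> {e \<in> E. e \<subseteq> {v1,v2,v4}}"
      then have "e \<in> E" "e \<subseteq> {v1,v2,v4}" by auto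
      moreover have "e \<in> {{v1,v2}, {v1,v3}, {v2,v3}, {v2,v4}, {v3,v4}}" using sub4 calculation by blast
      ultimately show "e \<in> {{v1,v2},{v2,v4},{v2,v4}}" using d 14 by auto
    qed
    show ?thesis apply (rule trip) using assms(3-6) d wpos s124 by auto
  qed
  have p: "w {v1,v2} \<le> x {v1,v2} v1 + x {v1,v2} v2"
    "w {v1,v3} \<le> x {v1,v3} v1 + x {v1,v3} v3"
    "w {v2,v3} \<le> x {v2,v3} v2 + x {v2,v3} v3"
    "w {v2,v4} \<le> x {v2,v4} v2 + x {v2,v4} v4"
    "w {v3,v4} \<le> x {v3,v4} v3 + x {v3,v4} v4"
    using pair inE assms(3-6) d by auto
  have V4: "{v1,v2,v3,v4} \<subseteq> V" using assms(3-6) by blast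
  have m: "x {v1,v2} v1 \<le> x {v1,v2,v3} v1" "x {v1,v2} v2 \<le> x {v1,v2,v3} v2"
    "x {v1,v3} v1 \<le> x {v1,v2,v3} v1" "x {v1,v3} v3 \<le> x {v1,v2,v3} v3"
    "x {v2,v3} v2 \<le> x {v1,v2,v3} v2" "x {v2,v3} v3 \<le> x {v1,v2,v3} v3"
    "x {v2,v3} v2 \<le> x {v2,v3,v4} v2" "x {v2,v3} v3 \<le> x {v2,v3,v4} v3"
    "x {v2,v4} v2 \<le> x {v2,v3,v4} v2" "x {v2,v4} v4 \<le> x {v2,v3,v4} v4"
    "x {v3,v4} v3 \<le> x {v2,v3,v4} v3" "x {v3,v4} v4 \<le> x {v2,v3,v4} v4"
    "x {v1,v3} v1 \<le> x {v1,v3,v4} v1" "x {v1,v3} v3 \<le> x {v1,v3,v4} v3"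
    "x {v3,v4} v3 \<le> x {v1,v3,v4} v3" "x {v3,v4} v4 \<le> x {v1,v3,v4} v4"
    "x {v1,v2} v1 \<le> x {v1,v2,v4} v1" "x {v1,v2} v2 \<le> x {v1,v2,v4} v2"
    "x {v2,v4} v2 \<le> x {v1,v2,v4} v2" "x {v2,v4} v4 \<le> x {v1,v2,v4} v4"
    by (rule mono; use V4 in auto)+
  have n: "0 \<le> x {v1,v2} v1" "0 \<le> x {v1,v2} v2" "0 \<le> x {v1,v3} v1" "0 \<le> x {v1,v3} v3"
    "0 \<le> x {v2,v3} v2" "0 \<le> x {v2,v3} v3" "0 \<le> x {v2,v4} v2" "0 \<le> x {v2,v4} v4"
    "0 \<le> x {v3,v4} v3" "0 \<le> x {v3,v4} v4"
    "0 \<le> x {v1,v2,v3} v1" "0 \<le> x {v1,v2,v3} v2" "0 \<le> x {v1,v2,v3} v3"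
    "0 \<le> x {v2,v3,v4} v2" "0 \<le> x {v2,v3,v4} v3" "0 \<le> x {v2,v3,v4} v4"
    "0 \<le> x {v1,v3,v4} v1" "0 \<le> x {v1,v3,v4} v3" "0 \<le> x {v1,v3,v4} v4"
    "0 \<le> x {v1,v2,v4} v1" "0 \<le> x {v1,v2,v4} v2" "0 \<le> x {v1,v2,v4} v4"
    by (rule nn; use V4 in auto)+
  show ?thesis
    by (rule arith_core[OF wpos p t123[unfolded le_max_iff_disj] t234[unfolded le_max_iff_disj]
        t134[unfolded max.idem le_max_iff_disj] t124[unfolded max.idem le_max_iff_disj] m n])
qed

end
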